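(* Let $n\geq 2$ and write $p_{n+1} = k_n d_n + r_n$ with integers $k_n\ge 0$ and $1\leq r_n < d_n$ (division of $p_{n+1}$ by $d_n$). Each of the following statements is equivalent to $d_n^2 < 2p_{n+1}$: 1. The number of odd positive integers $m\le p_n$ with $m\,p_{n+1} > p_n^2$ equals $d_n/2$; that is, the smallest odd multiple of $p_{n+1}$ greater than $p_n^2$ is $(p_n - (d_n-2))\,p_{n+1}$. 2. $(d_n-2)\,p_{n+1}$ is the largest even multiple of $p_{n+1}$ that is at most $d_n p_n$. 3. $k_n \geq d_n/2$.
   Context: $p_n$ denotes the $n$th prime ($p_1=2$) and $d_n := p_{n+1}-p_n$. *)

theory Defs
  imports "HOL-Computational_Algebra.Primes" "HOL-Library.Infinite_Set"
begin

text \<open>p n is the n-th prime, 1-indexed: p 1 = 2.\<close>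
definition p :: "nat \<Rightarrow> nat" where
  "p n = enumerate {q::nat. prime q} (n - 1)"

definition d :: "nat \<Rightarrow> nat" where
  "d n = p (Suc n) - p n"

end

theory Submission
  imports Defs
begin

lemma p_facts:
  assumes "n \<ge> 2"
  shows "prime (p n)" "prime (p (Suc n))" "p n < p (Suc n)" "p n \<ge> 3"
proof -
  have inf: "infinite {q::nat. prime q}" using primes_infinite by simp
  show "prime (p n)" "prime (p (Suc n))"
    unfolding p_def using enumerate_in_set[OF inf] by auto
  show "p n < p (Suc n)" unfolding p_def using assms enumerate_step[OF inf]
    using enumerate_mono[OF _ inf, of "n - 1" n] by simp
  have "p n \<ge> p 2" unfolding p_def using assms inf by simp
  moreover have "p 2 > 2"
  proof -
    have "p 2 > p 1" unfolding p_def using enumerate_step[OF inf, of 0] by simp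
    moreover have "p 1 \<ge> 2" unfolding p_def using enumerate_in_set[OF inf, of 0] prime_ge_2_nat by auto
    ultimately show ?thesis by simp
  qed
  ultimately show "p n \<ge> 3" by simp
qed


lemma claim4:
  fixes d k r Q :: nat
  assumes "even d" "Q = k * d + r" "1 \<le> r" "r < d"
  shows "(2 * k \<ge> d) \<longleftrightarrow> d^2 < 2 * Q"
proof
  assume "2 * k \<ge> d"
  hence "d * d \<le> 2 * (k * d)" using mult_right_mono[of d "2*k" d] by simp
  thus "d^2 < 2 * Q" using assms unfolding power2_eq_square by linarith
next
  assume h: "d^2 < 2 * Q"
  show "2 * k \<ge> d"
  proof (rule ccontr)
    assume "\<not> 2 * k \<ge> d"
    with assms(1) have "2 * k + 2 \<le> d" by presburger
    hence "(2 * k + 2) * d \<le> d * d" using mult_right_mono[of "2*k+2" d d] by simp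
    hence "2 * (k * d) + 2 * d \<le> d * d" by (simp add: algebra_simps)
    thus False using assms h unfolding power2_eq_square by linarith
  qed
qed

lemma d_lt_P:
  fixes P d :: nat
  assumes "P \<ge> 3" "even d" "d \<ge> 2" "d^2 < 2 * (P + d)"
  shows "d < P"
proof (rule ccontr)
  assume "\<not> d < P"
  hence "d \<ge> P" by simp
  hence "d \<ge> 4" using assms by presburger
  have "P * (d - 2) \<le> d * (d - 2)" using \<open>d \<ge> P\<close> by (simp add: mult_right_mono)
  moreover have "P * 2 \<le> P * (d - 2)" using \<open>d \<ge> 4\<close> by (intro mult_left_mono) auto
  moreover have "d * (d - 2) + 2 * d = d^2" using \<open>d \<ge> 4\<close>
    by (simp add: power2_eq_square algebra_simps diff_mult_distrib2)
  moreover have "d^2 < 2 * P + 2 * d" using assms(4) by simp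
  ultimately show False by linarith
qed

lemma claim2:
  fixes P Q d :: nat
  assumes oP: "odd P" and oQ: "odd Q" and P3: "P \<ge> 3" and PQ: "P < Q" and dd: "d = Q - P"
  shows "(LEAST x::nat. (\<exists>j. odd j \<and> x = j * Q) \<and> x > P^2) = (P - (d - 2)) * Q
         \<longleftrightarrow> d^2 < 2 * Q"
proof -
  have ed: "even d" using oP oQ PQ dd by simp
  have d2: "d \<ge> 2" using ed PQ dd by presburger
  have Qe: "Q = P + d" using PQ dd by simp
  let ?X = "\<lambda>x::nat. (\<exists>j. odd j \<and> x = j * Q) \<and> x > P^2"
  have XPQ: "?X (P * Q)"
    using oP PQ P3 by (auto simp: power2_eq_square intro: mult_strict_left_mono)
  show ?thesis
  proof
    assume L: "Least ?X = (P - (d - 2)) * Q"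
    have "?X (Least ?X)" using XPQ by (rule LeastI)
    hence g: "(P - (d - 2)) * Q > P^2" using L by simp
    show "d^2 < 2 * Q"
    proof (cases "d - 2 < P")
      case True
      hence "int ((P - (d - 2)) * Q) = (int P - int d + 2) * (int P + int d)"
        using Qe d2 by (simp add: of_nat_diff)
      also have "\<dots> = int P ^ 2 - int d ^2 + 2 * (int P + int d)" by (simp add: algebra_simps power2_eq_square)
      finally have e: "int ((P - (d - 2)) * Q) = int P ^ 2 - int d ^2 + 2 * (int P + int d)" .
      have "int (P^2) < int ((P - (d - 2)) * Q)" using g by (simp only: of_nat_less_iff)
      hence "int P ^ 2 < int P ^ 2 - int d ^2 + 2 * (int P + int d)" using e by simp
      hence "int (d^2) < int (2 * Q)" using Qe by simp
      thus ?thesis by (simp only: of_nat_less_iff)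
    next
      case False
      thus ?thesis using g by simp
    qed
  next
    assume h: "d^2 < 2 * Q"
    have dP: "d < P" using d_lt_P[OF P3 ed d2] h Qe by simp
    show "Least ?X = (P - (d - 2)) * Q"
    proof (rule Least_equality)
      have "int ((P - (d - 2)) * Q) = (int P - int d + 2) * (int P + int d)"
        using Qe d2 dP by (simp add: of_nat_diff)
      also have "\<dots> = int P ^ 2 - int d ^2 + 2 * (int P + int d)" by (simp add: algebra_simps power2_eq_square)
      also have "\<dots> > int P ^ 2"
      proof -
        have "int (d^2) < int (2 * Q)" using h by (simp only: of_nat_less_iff)
        hence "int d ^ 2 < 2 * (int P + int d)" using Qe by simp
        thus ?thesis by linarith
      qed
      finally have "int (P^2) < int ((P - (d - 2)) * Q)" by (simp only: of_nat_power)
      hence "(P - (d - 2)) * Q > P^2" by (simp only: of_nat_less_iff)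
      moreover have "odd (P - (d - 2))" using oP ed dP d2 by simp
      ultimately show "?X ((P - (d - 2)) * Q)" by blast
    next
      fix y assume "?X y"
      then obtain j where j: "odd j" "y = j * Q" "j * Q > P^2" by blast
      have "P - (d - 2) \<le> j"
      proof (rule ccontr)
        assume "\<not> P - (d - 2) \<le> j"
        hence "j \<le> P - d" using j(1) oP ed dP d2 by presburger
        hence "int j * int Q \<le> (int P - int d) * int Q" using dP
          by (simp add: of_nat_diff mult_right_mono)
        also have "\<dots> = int P ^ 2 - int d ^ 2" using Qe by (simp add: algebra_simps power2_eq_square)
        also have "\<dots> \<le> int P ^ 2" by simp
        finally have "int (j * Q) \<le> int (P^2)" by (simp only: of_nat_power of_nat_mult)
        hence "j * Q \<le> P^2" by (simp only: of_nat_le_iff)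
        thus False using j by simp
      qed
      thus "(P - (d - 2)) * Q \<le> y" using j by (simp add: mult_right_mono)
    qed
  qed
qed

lemma claim3:
  fixes P Q d :: nat
  assumes oP: "odd P" and oQ: "odd Q" and P3: "P \<ge> 3" and PQ: "P < Q" and dd: "d = Q - P"
  shows "(d - 2) * Q = (GREATEST x::nat. (\<exists>j. even j \<and> x = j * Q) \<and> x \<le> d * P)
         \<longleftrightarrow> d^2 < 2 * Q"
proof -
  have ed: "even d" using oP oQ PQ dd by simp
  have d2: "d \<ge> 2" using ed PQ dd by presburger
  have Qe: "Q = P + d" using PQ dd by simp
  have ne: "d^2 \<noteq> 2 * Q"
  proof
    assume a: "d^2 = 2 * Q"
    obtain e where "d = 2 * e" using ed by blast
    hence "Q = 2 * (e * e)" using a by (simp add: power2_eq_square)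
    thus False using oQ by simp
  qed
  have key: "(d - 2) * Q \<le> d * P \<longleftrightarrow> d^2 \<le> 2 * Q"
  proof -
    have "int ((d - 2) * Q) = (int d - 2) * (int P + int d)"
      using Qe d2 by (simp only: of_nat_mult of_nat_diff of_nat_add) simp
    hence "int ((d - 2) * Q) = int (d * P) + int d ^ 2 - 2 * (int P + int d)"
      by (simp add: algebra_simps power2_eq_square)
    hence "(d - 2) * Q \<le> d * P \<longleftrightarrow> int d ^ 2 \<le> 2 * (int P + int d)" by linarith
    also have "\<dots> \<longleftrightarrow> d^2 \<le> 2 * Q" using Qe
      by (metis of_nat_add of_nat_le_iff of_nat_mult of_nat_numeral of_nat_power)
    finally show ?thesis .
  qed
  let ?Y = "\<lambda>x::nat. (\<exists>j. even j \<and> x = j * Q) \<and> x \<le> d * P"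
  show ?thesis
  proof
    assume L: "(d - 2) * Q = Greatest ?Y"
    have "?Y 0" by auto
    hence "?Y (Greatest ?Y)" by (rule GreatestI_nat[where b = "d * P"]) simp
    hence "(d - 2) * Q \<le> d * P" using L by simp
    thus "d^2 < 2 * Q" using key ne by simp
  next
    assume h: "d^2 < 2 * Q"
    show "(d - 2) * Q = Greatest ?Y"
    proof (rule Greatest_equality[symmetric])
      show "?Y ((d - 2) * Q)" using key h ed d2 by auto
    next
      fix y assume "?Y y"
      then obtain j where j: "even j" "y = j * Q" "j * Q \<le> d * P" by blast
      have "j < d"
      proof (rule ccontr)
        assume "\<not> j < d"
        hence "d * Q \<le> j * Q" by (simp add: mult_right_mono)
        moreover have "d * P < d * Q" using PQ d2 by simp
        ultimately show False using j(3) by linarith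
      qed
      hence "j \<le> d - 2" using j(1) ed by presburger
      thus "y \<le> (d - 2) * Q" using j by (simp add: mult_right_mono)
    qed
  qed
qed

lemma claim1:
  fixes P Q d :: nat
  assumes oP: "odd P" and oQ: "odd Q" and P3: "P \<ge> 3" and PQ: "P < Q" and dd: "d = Q - P"
  shows "card {m::nat. odd m \<and> 0 < m \<and> m \<le> P \<and> m * Q > P^2} = d div 2
         \<longleftrightarrow> d^2 < 2 * Q"
proof -
  have ed: "even d" using oP oQ PQ dd by simp
  have d2: "d \<ge> 2" using ed PQ dd by presburger
  have Qe: "Q = P + d" using PQ dd by simp
  define B where "B = {i::nat. 2 * i < P \<and> (P - 2 * i) * Q > P^2}"
  have AB: "{m::nat. odd m \<and> 0 < m \<and> m \<le> P \<and> m * Q > P^2} = (\<lambda>i. P - 2 * i) ` B"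
  proof (rule set_eqI, rule iffI)
    fix m assume "m \<in> {m::nat. odd m \<and> 0 < m \<and> m \<le> P \<and> m * Q > P^2}"
    hence m: "odd m" "0 < m" "m \<le> P" "m * Q > P^2" by auto
    define i where "i = (P - m) div 2"
    have "m = P - 2 * i" unfolding i_def using m oP by presburger
    moreover have "2 * i < P" unfolding i_def using m by presburger
    ultimately show "m \<in> (\<lambda>i. P - 2 * i) ` B" using m unfolding B_def by blast
  next
    fix m assume "m \<in> (\<lambda>i. P - 2 * i) ` B"
    then obtain i where "m = P - 2 * i" "2 * i < P" "(P - 2 * i) * Q > P^2" unfolding B_def by blast
    thus "m \<in> {m::nat. odd m \<and> 0 < m \<and> m \<le> P \<and> m * Q > P^2}" using oP by auto
  qed
  have inj: "inj_on (\<lambda>i. P - 2 * i) B" unfolding B_def by (rule inj_onI) auto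
  have cardAB: "card {m::nat. odd m \<and> 0 < m \<and> m \<le> P \<and> m * Q > P^2} = card B"
    unfolding AB using inj by (rule card_image)
  have keyB: "i \<in> B \<longleftrightarrow> 2 * i < P \<and> int Q * (int d - 2 * int i) > int d ^ 2" for i
  proof -
    have "2 * i < P \<Longrightarrow> int ((P - 2 * i) * Q) - int (P^2) = int Q * (int d - 2 * int i) - int d ^ 2"
    proof -
      assume "2 * i < P"
      hence "int ((P - 2 * i) * Q) = (int P - 2 * int i) * (int P + int d)"
        using Qe by (simp only: of_nat_mult of_nat_diff of_nat_add) simp
      thus ?thesis using Qe by (simp add: algebra_simps power2_eq_square)
    qed
    hence "2 * i < P \<Longrightarrow> ((P - 2 * i) * Q > P^2 \<longleftrightarrow> int Q * (int d - 2 * int i) > int d ^ 2)"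
      by linarith
    thus ?thesis unfolding B_def by auto
  qed
  show ?thesis
  proof
    assume c: "card {m::nat. odd m \<and> 0 < m \<and> m \<le> P \<and> m * Q > P^2} = d div 2"
    show "d^2 < 2 * Q"
    proof (rule ccontr)
      assume "\<not> d^2 < 2 * Q"
      hence h: "int d ^ 2 \<ge> 2 * int Q" by (metis not_less of_nat_le_iff of_nat_mult of_nat_numeral of_nat_power)
      have "B \<subseteq> {..< d div 2 - 1}"
      proof
        fix i assume "i \<in> B"
        hence g: "int Q * (int d - 2 * int i) > 2 * int Q" using keyB h by auto
        have "int d - 2 * int i > 2"
        proof (rule ccontr)
          assume "\<not> int d - 2 * int i > 2"
          hence "int Q * (int d - 2 * int i) \<le> int Q * 2" using mult_left_mono[of "int d - 2 * int i" 2 "int Q"] by simp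
          thus False using g by linarith
        qed
        hence "2 * i + 4 \<le> d" using ed by presburger
        thus "i \<in> {..< d div 2 - 1}" using ed by auto
      qed
      hence "card B \<le> d div 2 - 1" by (metis card_lessThan card_mono finite_lessThan)
      thus False using c cardAB d2 by simp
    qed
  next
    assume h: "d^2 < 2 * Q"
    hence h': "int d ^ 2 < 2 * int Q" by (metis of_nat_less_iff of_nat_mult of_nat_numeral of_nat_power)
    have dP: "d < P" using d_lt_P[OF P3 ed d2] h Qe by simp
    have "B = {..< d div 2}"
    proof (rule set_eqI, rule iffI)
      fix i assume "i \<in> B"
      hence g: "int Q * (int d - 2 * int i) > int d ^ 2" using keyB by auto
      have "int d - 2 * int i > 0"
      proof (rule ccontr)
        assume "\<not> int d - 2 * int i > 0"
        hence "int Q * (int d - 2 * int i) \<le> 0" by (simp add: mult_nonneg_nonpos)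
        moreover have "int d ^ 2 \<ge> 0" by simp
        ultimately show False using g by linarith
      qed
      thus "i \<in> {..< d div 2}" using ed by auto
    next
      fix i assume "i \<in> {..< d div 2}"
      hence i: "2 * i + 2 \<le> d" using ed by auto
      hence "int d - 2 * int i \<ge> 2" by linarith
      hence "int Q * 2 \<le> int Q * (int d - 2 * int i)" using mult_left_mono[of 2 "int d - 2 * int i" "int Q"] by simp
      hence "int Q * (int d - 2 * int i) > int d ^ 2" using h' by linarith
      moreover have "2 * i < P" using i dP by linarith
      ultimately show "i \<in> B" using keyB by auto
    qed
    thus "card {m::nat. odd m \<and> 0 < m \<and> m \<le> P \<and> m * Q > P^2} = d div 2"
      using cardAB by simp
  qed
qed

theorem theorem1p6:
  fixes n k r :: nat
  assumes hn: "n \<ge> 2"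
    and hdiv: "p (n + 1) = k * d n + r"
    and hr: "1 \<le> r" "r < d n"
  shows
    "(card {m::nat. odd m \<and> 0 < m \<and> m \<le> p n \<and> m * p (n + 1) > (p n)^2} = d n div 2
        \<longleftrightarrow> (d n)^2 < 2 * p (n + 1))
   \<and> ((LEAST x::nat. (\<exists>j. odd j \<and> x = j * p (n + 1)) \<and> x > (p n)^2)
          = (p n - (d n - 2)) * p (n + 1)
        \<longleftrightarrow> (d n)^2 < 2 * p (n + 1))
   \<and> ((d n - 2) * p (n + 1)
          = (GREATEST x::nat. (\<exists>j. even j \<and> x = j * p (n + 1)) \<and> x \<le> d n * p n)
        \<longleftrightarrow> (d n)^2 < 2 * p (n + 1))
   \<and> (2 * k \<ge> d n \<longleftrightarrow> (d n)^2 < 2 * p (n + 1))"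
proof -
  note pf = p_facts[OF hn]
  have oP: "odd (p n)" using pf by (intro prime_odd_nat) auto
  have oQ: "odd (p (n + 1))" using pf by (intro prime_odd_nat) auto
  have P3: "p n \<ge> 3" using pf by simp
  have PQ: "p n < p (n + 1)" using pf by simp
  have dd: "d n = p (n + 1) - p n" unfolding d_def by simp
  have ed: "even (d n)" using oP oQ PQ dd by simp
  show ?thesis
    using claim1[OF oP oQ P3 PQ dd] claim2[OF oP oQ P3 PQ dd] claim3[OF oP oQ P3 PQ dd]
      claim4[OF ed hdiv hr] by blast
qed

end
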